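(* Let $n\geq1$ and $p,q>1$ satisfy \[ \frac{p+1}{pq-1}>\frac{n-1}{2},\qquad \frac{n-1}{2}(q-1)<1 . \] Let $\varepsilon>0$ and $C>0$. Then there do not exist $H\in C^1(\mathbb{R}_+)$ and $G\in C^2(\mathbb{R}_+)$ satisfying, for all $t\geq0$, \[ H'(t)\geq C\langle t\rangle^{-\frac{n-1}{2}(q-1)}G(t)^q,\quad H(t)\geq0,\quad H'(t)\geq0, \] \[ G''(t)+2G'(t)\geq C\langle t\rangle^{-\frac{n-1}{2}(p-1)}H(t)^p,\quad G(t)\geq C\varepsilon,\quad G'(t)\geq0 . \]
   Context: $\langle t\rangle:=\sqrt{1+t^2}$, $\mathbb{R}_+=[0,\infty)$. *)

theory Defs
  imports "HOL-Analysis.Analysis"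
begin

definition jb :: "real \<Rightarrow> real" where
  "jb t = sqrt (1 + t\<^sup>2)"

end

theory Submission
  imports Defs
begin

lemma mvt_lower:
  fixes f f' :: "real \<Rightarrow> real"
  assumes "0 \<le> s" "s \<le> t"
    and d: "\<And>x. 0 \<le> x \<Longrightarrow> (f has_real_derivative f' x) (at x within {0..})"
    and m: "\<And>x. s \<le> x \<Longrightarrow> x \<le> t \<Longrightarrow> m \<le> f' x"
  shows "m * (t - s) \<le> f t - f s"
proof (cases "s = t")
  case True then show ?thesis by simp
next
  case False
  then have st: "s < t" using assms by simp
  have "\<And>x. s \<le> x \<Longrightarrow> x \<le> t \<Longrightarrow> (f has_derivative (\<lambda>h. f' x * h)) (at x within {s..t})"
  proof -
    fix x assume "s \<le> x" "x \<le> t"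
    then have "(f has_real_derivative f' x) (at x within {s..t})"
      using d[of x] assms(1) by (auto intro: DERIV_subset)
    then show "(f has_derivative (\<lambda>h. f' x * h)) (at x within {s..t})"
      by (simp add: has_field_derivative_def)
  qed
  from mvt_simple[OF st this] obtain x where x: "x \<in> {s<..<t}" "f t - f s = f' x * (t - s)"
    by blast
  have "m * (t - s) \<le> f' x * (t - s)" using m[of x] x(1) st by (intro mult_right_mono) auto
  then show ?thesis using x(2) by (simp add: mult.commute)
qed

lemma mono_from_deriv:
  fixes f f' :: "real \<Rightarrow> real"
  assumes "0 \<le> s" "s \<le> t"
    and d: "\<And>x. 0 \<le> x \<Longrightarrow> (f has_real_derivative f' x) (at x within {0..})"
    and m: "\<And>x. 0 \<le> x \<Longrightarrow> 0 \<le> f' x"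
  shows "f s \<le> f t"
  using mvt_lower[OF assms(1,2) d, of 0] m assms(1) by force

lemma damp:
  fixes G' G'' :: "real \<Rightarrow> real"
  assumes d: "\<And>x. 0 \<le> x \<Longrightarrow> (G' has_real_derivative G'' x) (at x within {0..})"
    and "0 \<le> s" "s \<le> u" "u - s \<le> 1" "0 \<le> F" "0 \<le> G' s"
    and F: "\<And>x. s \<le> x \<Longrightarrow> x \<le> u \<Longrightarrow> F \<le> G'' x + 2 * G' x"
  shows "exp (-2) * F * (u - s) \<le> G' u"
proof -
  define K where "K x = exp (2 * x) * G' x" for x
  have dK: "(K has_real_derivative (exp (2 * x) * (G'' x + 2 * G' x))) (at x within {0..})"
    if "0 \<le> x" for x
    unfolding K_def
    by (rule derivative_eq_intros d[OF that] | simp add: algebra_simps)+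
  have "exp (2 * s) * F * (u - s) \<le> K u - K s"
  proof (rule mvt_lower[OF assms(2,3) dK])
    fix x assume "s \<le> x" "x \<le> u"
    then show "exp (2 * s) * F \<le> exp (2 * x) * (G'' x + 2 * G' x)"
      using F[of x] assms by (intro mult_mono) auto
  qed
  moreover have "K s \<ge> 0" using assms unfolding K_def by simp
  ultimately have "exp (2 * s) * F * (u - s) \<le> exp (2 * u) * G' u" unfolding K_def by linarith
  then have "exp (2 * s) * F * (u - s) / exp (2 * u) \<le> G' u"
    by (simp add: divide_le_eq mult.commute)
  moreover have "exp (2 * s) * F * (u - s) / exp (2 * u) = exp (2 * (s - u)) * (F * (u - s))"
    by (simp add: exp_diff algebra_simps)
  moreover have "exp (-2) * (F * (u - s)) \<le> exp (2 * (s - u)) * (F * (u - s))"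
    using assms by (intro mult_right_mono) auto
  ultimately show ?thesis by (simp add: mult.assoc)
qed


lemma step:
  fixes H H' G G' G'' :: "real \<Rightarrow> real"
  assumes dH: "\<And>x. 0 \<le> x \<Longrightarrow> (H has_real_derivative H' x) (at x within {0..})"
    and dG: "\<And>x. 0 \<le> x \<Longrightarrow> (G has_real_derivative G' x) (at x within {0..})"
    and dG': "\<And>x. 0 \<le> x \<Longrightarrow> (G' has_real_derivative G'' x) (at x within {0..})"
    and pos: "\<And>x. 0 \<le> x \<Longrightarrow> 0 \<le> H x \<and> 0 \<le> H' x \<and> 0 \<le> G x \<and> 0 \<le> G' x"
    and c: "0 < c1" "0 < c2" "0 < p" "0 < q"
    and iH: "\<And>t. 0 \<le> t \<Longrightarrow> t \<le> L \<Longrightarrow> c1 * G t powr q \<le> H' t"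
    and iG: "\<And>t. 0 \<le> t \<Longrightarrow> t \<le> L \<Longrightarrow> c2 * H t powr p \<le> G'' t + 2 * G' t"
    and v: "0 \<le> v" "0 < \<delta>" "v + 3 * \<delta> \<le> L"
  shows "\<delta> * c1 * (\<delta> * min \<delta> 1 * exp (-2) * (c2 * H v powr p)) powr q \<le> H (v + 3 * \<delta>)"
proof -
  define \<eta> where "\<eta> = min \<delta> 1"
  define F where "F = c2 * H v powr p"
  have F0: "0 \<le> F" unfolding F_def using c by simp
  have \<eta>: "0 < \<eta>" "\<eta> \<le> \<delta>" "\<eta> \<le> 1" unfolding \<eta>_def using v by auto
  have Hm: "H s \<le> H t" if "0 \<le> s" "s \<le> t" for s t
    using mono_from_deriv[OF that dH] pos by blast
  have Gm: "G s \<le> G t" if "0 \<le> s" "s \<le> t" for s t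
    using mono_from_deriv[OF that dG] pos by blast
  have G'b: "exp (-2) * F * \<eta> \<le> G' w" if w: "v + \<delta> \<le> w" "w \<le> v + 2 * \<delta>" for w
  proof -
    have "exp (-2) * F * (w - (w - \<eta>)) \<le> G' w"
    proof (rule damp[OF dG'])
      show "0 \<le> w - \<eta>" using w \<eta> v by linarith
      show "w - \<eta> \<le> w" "w - (w - \<eta>) \<le> 1" using \<eta> by auto
      show "0 \<le> F" by (rule F0)
      show "0 \<le> G' (w - \<eta>)" using pos[of "w - \<eta>"] w \<eta> v by auto
      fix x assume x: "w - \<eta> \<le> x" "x \<le> w"
      have "H v powr p \<le> H x powr p"
        using Hm[of v x] pos[of v] x w \<eta> v c by (intro powr_mono2) auto
      then have "F \<le> c2 * H x powr p" unfolding F_def using c by simp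
      also have "\<dots> \<le> G'' x + 2 * G' x" using iG[of x] x w \<eta> v by auto
      finally show "F \<le> G'' x + 2 * G' x" .
    qed
    then show ?thesis by simp
  qed
  have "exp (-2) * F * \<eta> * ((v + 2 * \<delta>) - (v + \<delta>)) \<le> G (v + 2 * \<delta>) - G (v + \<delta>)"
    using v by (intro mvt_lower[OF _ _ dG] G'b) auto
  moreover have "0 \<le> G (v + \<delta>)" using pos[of "v + \<delta>"] v by auto
  ultimately have G2: "\<delta> * \<eta> * exp (-2) * F \<le> G (v + 2 * \<delta>)" by (simp add: algebra_simps)
  have H'b: "c1 * G (v + 2 * \<delta>) powr q \<le> H' w" if w: "v + 2 * \<delta> \<le> w" "w \<le> v + 3 * \<delta>" for w
  proof -
    have "G (v + 2 * \<delta>) powr q \<le> G w powr q"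
      using Gm[of "v + 2 * \<delta>" w] pos[of "v + 2 * \<delta>"] w v c by (intro powr_mono2) auto
    then have "c1 * G (v + 2 * \<delta>) powr q \<le> c1 * G w powr q" using c by simp
    also have "\<dots> \<le> H' w" using iH[of w] w v by auto
    finally show ?thesis .
  qed
  have "c1 * G (v + 2 * \<delta>) powr q * ((v + 3 * \<delta>) - (v + 2 * \<delta>)) \<le> H (v + 3 * \<delta>) - H (v + 2 * \<delta>)"
    using v by (intro mvt_lower[OF _ _ dH] H'b) auto
  moreover have "0 \<le> H (v + 2 * \<delta>)" using pos[of "v + 2 * \<delta>"] v by auto
  ultimately have H3: "\<delta> * c1 * G (v + 2 * \<delta>) powr q \<le> H (v + 3 * \<delta>)" by (simp add: algebra_simps)
  have "(\<delta> * \<eta> * exp (-2) * F) powr q \<le> G (v + 2 * \<delta>) powr q"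
    using G2 F0 \<eta> v c by (intro powr_mono2) auto
  then have "\<delta> * c1 * (\<delta> * \<eta> * exp (-2) * F) powr q \<le> \<delta> * c1 * G (v + 2 * \<delta>) powr q"
    using c v by (intro mult_left_mono) auto
  with H3 show ?thesis unfolding \<eta>_def F_def by simp
qed


lemma disc:
  fixes y :: "nat \<Rightarrow> real"
  assumes r: "r > 1" and M: "M \<ge> 0"
    and rec: "\<And>k. r * y k - B - M * real k \<le> y (Suc k)"
    and y0: "B + M / (r - 1) \<le> (r - 1) * y 0"
  shows "(B + M / (r - 1)) / (r - 1) + M / (r - 1) * real k \<le> y k"
proof (induction k)
  case 0
  then show ?case using y0 r by (simp add: divide_le_eq mult.commute)
next
  case (Suc k)
  define E where "E = M / (r - 1)"
  define D where "D = (B + E) / (r - 1)"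
  have IH: "D + E * real k \<le> y k" using Suc unfolding D_def E_def .
  have e1: "r * E - M = E" unfolding E_def using r by (simp add: field_simps)
  have e2: "r * D - B = D + E" unfolding D_def using r by (simp add: field_simps)
  have "r * (D + E * real k) \<le> r * y k" using IH r by simp
  then have "r * (D + E * real k) - B - M * real k \<le> y (Suc k)" using rec[of k] by linarith
  moreover have "r * (D + E * real k) - B - M * real k = D + E * real (Suc k)"
  proof -
    have "r * (D + E * real k) - B - M * real k = (r * D - B) + (r * E - M) * real k"
      by (simp add: algebra_simps)
    also have "\<dots> = D + E * real (Suc k)" using e1 e2 by (simp add: algebra_simps)
    finally show ?thesis .
  qed
  ultimately show ?case unfolding D_def E_def by simp
qed


theorem lemma5p3:
  fixes n :: nat and p q \<epsilon> C :: real
  assumes "n \<ge> 1" and "p > 1" and "q > 1"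
    and "(p + 1) / (p * q - 1) > (real n - 1) / 2"
    and "(real n - 1) / 2 * (q - 1) < 1"
    and "\<epsilon> > 0" and "C > 0"
  shows "\<not> (\<exists>H H' G G' G'' :: real \<Rightarrow> real.
      (\<forall>t\<ge>0. (H has_real_derivative H' t) (at t within {0..})) \<and>
      continuous_on {0..} H' \<and>
      (\<forall>t\<ge>0. (G has_real_derivative G' t) (at t within {0..})) \<and>
      (\<forall>t\<ge>0. (G' has_real_derivative G'' t) (at t within {0..})) \<and>
      continuous_on {0..} G'' \<and>
      (\<forall>t\<ge>0.
         H' t \<ge> C * jb t powr (- ((real n - 1) / 2 * (q - 1))) * G t powr q \<and>
         H t \<ge> 0 \<and> H' t \<ge> 0 \<and>
         G'' t + 2 * G' t \<ge> C * jb t powr (- ((real n - 1) / 2 * (p - 1))) * H t powr p \<and>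
         G t \<ge> C * \<epsilon> \<and> G' t \<ge> 0))"
proof
  assume "\<exists>H H' G G' G'' :: real \<Rightarrow> real.
      (\<forall>t\<ge>0. (H has_real_derivative H' t) (at t within {0..})) \<and>
      continuous_on {0..} H' \<and>
      (\<forall>t\<ge>0. (G has_real_derivative G' t) (at t within {0..})) \<and>
      (\<forall>t\<ge>0. (G' has_real_derivative G'' t) (at t within {0..})) \<and>
      continuous_on {0..} G'' \<and>
      (\<forall>t\<ge>0.
         H' t \<ge> C * jb t powr (- ((real n - 1) / 2 * (q - 1))) * G t powr q \<and>
         H t \<ge> 0 \<and> H' t \<ge> 0 \<and>
         G'' t + 2 * G' t \<ge> C * jb t powr (- ((real n - 1) / 2 * (p - 1))) * H t powr p \<and>
         G t \<ge> C * \<epsilon> \<and> G' t \<ge> 0)"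
  then obtain H H' G G' G'' :: "real \<Rightarrow> real" where
    dH0: "\<forall>t\<ge>0. (H has_real_derivative H' t) (at t within {0..})" and
    dG0: "\<forall>t\<ge>0. (G has_real_derivative G' t) (at t within {0..})" and
    dG'0: "\<forall>t\<ge>0. (G' has_real_derivative G'' t) (at t within {0..})" and
    I: "\<forall>t\<ge>0.
         H' t \<ge> C * jb t powr (- ((real n - 1) / 2 * (q - 1))) * G t powr q \<and>
         H t \<ge> 0 \<and> H' t \<ge> 0 \<and>
         G'' t + 2 * G' t \<ge> C * jb t powr (- ((real n - 1) / 2 * (p - 1))) * H t powr p \<and>
         G t \<ge> C * \<epsilon> \<and> G' t \<ge> 0"
    by blast
  define a where "a = (real n - 1) / 2"
  define \<alpha> where "\<alpha> = a * (q - 1)"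
  define \<beta> where "\<beta> = a * (p - 1)"
  define r where "r = p * q"
  define g0 where "g0 = C * \<epsilon>"
  have dH: "\<And>x. 0 \<le> x \<Longrightarrow> (H has_real_derivative H' x) (at x within {0..})" using dH0 by blast
  have dG: "\<And>x. 0 \<le> x \<Longrightarrow> (G has_real_derivative G' x) (at x within {0..})" using dG0 by blast
  have dG': "\<And>x. 0 \<le> x \<Longrightarrow> (G' has_real_derivative G'' x) (at x within {0..})" using dG'0 by blast
  have a0: "0 \<le> a" unfolding a_def using assms(1) by simp
  have \<alpha>0: "0 \<le> \<alpha>" unfolding \<alpha>_def using a0 assms(3) by simp
  have \<alpha>1: "\<alpha> < 1" unfolding \<alpha>_def a_def using assms(5) by simp
  have \<beta>0: "0 \<le> \<beta>" unfolding \<beta>_def using a0 assms(2) by simp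
  have r1: "1 < r" unfolding r_def using assms(2,3)
    by (smt (verit) mult_less_cancel_left1)
  have g0: "0 < g0" unfolding g0_def using assms(6,7) by simp
  have pq1: "0 < p * q - 1" using r1 unfolding r_def by simp
  have "a < (p + 1) / (p * q - 1)" using assms(4) unfolding a_def by simp
  then have "a * (p * q - 1) < p + 1" using pq1 by (simp add: less_divide_eq)
  then have kpos: "0 < q * (p + 1 - a * (p * q - 1))" using assms(3) by simp
  define \<kappa> where "\<kappa> = q * (p + 1 - a * (p * q - 1))"
  have \<kappa>0: "0 < \<kappa>" unfolding \<kappa>_def using kpos .
  define M where "M = (1 + 2 * q) * ln 2"
  have M0: "0 < M" unfolding M_def using assms(3) by simp
  define E where "E = M / (r - 1)"
  have E0: "0 < E" unfolding E_def using M0 r1 by simp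
  define LB where "LB l = l + (ln C - \<alpha> * (ln 3 + l)) + q * ln g0" for l
  define Bf where "Bf l = - ((1 + q) * (l - ln 8) + (ln C - \<alpha> * (ln 3 + l)) + q * ((ln C - \<beta> * (ln 3 + l)) - 2))" for l
  define \<Phi> where "\<Phi> l = (r - 1) * LB l - (Bf l + E)" for l
  have \<Phi>lin: "\<Phi> l = \<Phi> 0 + \<kappa> * l" for l
    unfolding \<Phi>_def LB_def Bf_def \<kappa>_def \<alpha>_def \<beta>_def r_def by (simp add: algebra_simps)
  define l where "l = max (ln 8) (- \<Phi> 0 / \<kappa>)"
  define T where "T = exp l"
  have lT: "ln T = l" unfolding T_def by simp
  have T8: "8 \<le> T" unfolding T_def l_def
    by (metis exp_ln max.cobounded1 exp_le_cancel_iff zero_less_numeral)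
  have \<Phi>pos: "0 \<le> \<Phi> l"
  proof -
    have "- \<Phi> 0 / \<kappa> \<le> l" unfolding l_def by simp
    then have "- \<Phi> 0 \<le> \<kappa> * l" using mult_left_mono[of "- \<Phi> 0 / \<kappa>" l \<kappa>] \<kappa>0 by simp
    then show ?thesis using \<Phi>lin[of l] by simp
  qed

  have T1: "1 \<le> T" "0 < T" using T8 by auto
  have pos: "\<And>x. 0 \<le> x \<Longrightarrow> 0 \<le> H x \<and> 0 \<le> H' x \<and> 0 \<le> G x \<and> 0 \<le> G' x"
    using I g0 unfolding g0_def by (meson order_trans less_imp_le)
  have Gg0: "\<And>x. 0 \<le> x \<Longrightarrow> g0 \<le> G x" using I unfolding g0_def by blast
  have jbb: "(3 * T) powr (- \<gamma>) \<le> jb t powr (- \<gamma>)" if "0 \<le> t" "t \<le> 2 * T" "0 \<le> \<gamma>" for t \<gamma>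
  proof -
    have "sqrt 1 \<le> sqrt (1 + t\<^sup>2)" by (intro real_sqrt_le_mono) simp
    then have j1: "1 \<le> jb t" unfolding jb_def by simp
    have "sqrt (1 + t\<^sup>2) \<le> sqrt ((1 + t)\<^sup>2)" using that by (intro real_sqrt_le_mono) (simp add: power2_eq_square algebra_simps)
    then have "jb t \<le> 1 + t" unfolding jb_def using that by simp
    then have "jb t \<le> 3 * T" using that T1 by linarith
    then show ?thesis using j1 that by (intro powr_mono2') auto
  qed
  define w1 where "w1 = (3 * T) powr (- \<alpha>)"
  define w2 where "w2 = (3 * T) powr (- \<beta>)"
  define c1 where "c1 = C * w1"
  define c2 where "c2 = C * w2"
  have c1p: "0 < c1" unfolding c1_def w1_def using assms(7) T1 by simp
  have c2p: "0 < c2" unfolding c2_def w2_def using assms(7) T1 by simp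
  have iH: "c1 * G t powr q \<le> H' t" if "0 \<le> t" "t \<le> 2 * T" for t
  proof -
    have "c1 * G t powr q \<le> C * jb t powr (- \<alpha>) * G t powr q"
      unfolding c1_def w1_def using jbb[OF that \<alpha>0] assms(7) by (intro mult_right_mono) auto
    also have "\<dots> \<le> H' t" using I that unfolding \<alpha>_def a_def by blast
    finally show ?thesis .
  qed
  have iG: "c2 * H t powr p \<le> G'' t + 2 * G' t" if "0 \<le> t" "t \<le> 2 * T" for t
  proof -
    have "c2 * H t powr p \<le> C * jb t powr (- \<beta>) * H t powr p"
      unfolding c2_def w2_def using jbb[OF that \<beta>0] assms(7) by (intro mult_right_mono) auto
    also have "\<dots> \<le> G'' t + 2 * G' t" using I that unfolding \<beta>_def a_def by blast
    finally show ?thesis .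
  qed
  have Hm: "H s \<le> H t" if "0 \<le> s" "s \<le> t" for s t
    using mono_from_deriv[OF that dH] pos by blast
  have "c1 * g0 powr q * (T - 0) \<le> H T - H 0"
  proof (rule mvt_lower[OF _ _ dH])
    fix x assume x: "0 \<le> x" "x \<le> T"
    have "g0 powr q \<le> G x powr q" using Gg0[of x] x g0 assms(3) by (intro powr_mono2) auto
    then have "c1 * g0 powr q \<le> c1 * G x powr q" using c1p by simp
    also have "\<dots> \<le> H' x" using iH[of x] x T1 by simp
    finally show "c1 * g0 powr q \<le> H' x" .
  qed (use T1 in auto)
  then have HT: "T * c1 * g0 powr q \<le> H T" using pos[of 0] by (simp add: algebra_simps)
  have HTp: "0 < T * c1 * g0 powr q" using T1 c1p g0 by simp
  have lnc1: "ln c1 = ln C - \<alpha> * (ln 3 + l)"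
    unfolding c1_def w1_def using assms(7) T1 lT by (simp add: ln_mult)
  have lnc2: "ln c2 = ln C - \<beta> * (ln 3 + l)"
    unfolding c2_def w2_def using assms(7) T1 lT by (simp add: ln_mult)
  have y0: "LB l \<le> ln (H T)"
  proof -
    have "ln (T * c1 * g0 powr q) \<le> ln (H T)" using HT HTp by simp
    moreover have "ln (T * c1 * g0 powr q) = LB l"
      unfolding LB_def using T1 c1p g0 lT lnc1 by (simp add: ln_mult)
    ultimately show ?thesis by simp
  qed
  define \<delta>0 where "\<delta>0 = T / 8"
  have \<delta>01: "1 \<le> \<delta>0" unfolding \<delta>0_def using T8 by simp
  have ln\<delta>0: "ln \<delta>0 = l - ln 8" unfolding \<delta>0_def using T1 lT by (simp add: ln_div)
  define \<delta> where "\<delta> k = \<delta>0 / 2 ^ k" for k :: nat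
  define tk where "tk k = T + 6 * \<delta>0 * (1 - 1 / 2 ^ k)" for k :: nat
  define x where "x k = H (tk k)" for k
  define y where "y k = ln (x k)" for k
  have \<delta>p: "0 < \<delta> k" for k unfolding \<delta>_def using \<delta>01 by simp
  have \<delta>le: "\<delta> k \<le> \<delta>0" for k unfolding \<delta>_def using \<delta>01 by (simp add: divide_le_eq)
  have tkS: "tk (Suc k) = tk k + 3 * \<delta> k" for k
    unfolding tk_def \<delta>_def by (simp add: field_simps)
  have tkge: "T \<le> tk k" for k unfolding tk_def using \<delta>01 by (simp add: divide_le_eq)
  have tkle: "tk k \<le> 2 * T" for k
  proof -
    have "6 * \<delta>0 * (1 - 1 / 2 ^ k) \<le> 6 * \<delta>0" using \<delta>01 by simp
    moreover have "6 * \<delta>0 \<le> T" unfolding \<delta>0_def using T1 by simp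
    ultimately show ?thesis unfolding tk_def by linarith
  qed
  have xpos: "0 < x k" for k
    using Hm[of T "tk k"] tkge[of k] T1 HT HTp unfolding x_def by linarith
  have xle: "x k \<le> H (2 * T)" for k
    using Hm[of "tk k" "2 * T"] tkge[of k] tkle[of k] T1 unfolding x_def by linarith
  have rec: "r * y k - Bf l - M * real k \<le> y (Suc k)" for k
  proof -
    have st: "\<delta> k * c1 * (\<delta> k * min (\<delta> k) 1 * exp (-2) * (c2 * H (tk k) powr p)) powr q \<le> H (tk k + 3 * \<delta> k)"
      using tkge[of k] T1 \<delta>p[of k] tkS[of k] tkle[of "Suc k"] c1p c2p assms(2,3)
      by (intro step[OF dH dG dG' pos _ _ _ _ iH iG]) auto
    have mn: "\<delta> k / \<delta>0 \<le> min (\<delta> k) 1"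
      using \<delta>01 \<delta>p[of k] \<delta>le[of k] by (auto simp: divide_le_eq min_def mult_le_cancel_left1 order_trans)
    define R where "R = \<delta> k * c1 * (\<delta> k * (\<delta> k / \<delta>0) * exp (-2) * (c2 * x k powr p)) powr q"
    have "R \<le> \<delta> k * c1 * (\<delta> k * min (\<delta> k) 1 * exp (-2) * (c2 * x k powr p)) powr q"
      unfolding R_def using mn \<delta>p[of k] \<delta>01 c1p c2p assms(3) xpos[of k]
      by (intro mult_left_mono powr_mono2 mult_right_mono) auto
    also have "\<dots> \<le> x (Suc k)" using st tkS[of k] unfolding x_def by simp
    finally have Rle: "R \<le> x (Suc k)" .
    have Rp: "0 < R" unfolding R_def using \<delta>p[of k] \<delta>01 c1p c2p xpos[of k] by simp
    have ln\<delta>: "ln (\<delta> k) = ln \<delta>0 - real k * ln 2"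
      unfolding \<delta>_def using \<delta>01 by (simp add: ln_div ln_realpow)
    have "ln R = ln (\<delta> k) + ln c1 + q * (ln (\<delta> k) + (ln (\<delta> k) - ln \<delta>0) + (-2) + ln c2 + p * y k)"
      unfolding R_def y_def using \<delta>p[of k] \<delta>01 c1p c2p xpos[of k] by (simp add: ln_mult ln_div)
    also have "\<dots> = r * y k - Bf l - M * real k"
      unfolding ln\<delta> lnc1 lnc2 ln\<delta>0 Bf_def M_def r_def by (simp add: algebra_simps)
    finally have "ln R = r * y k - Bf l - M * real k" .
    moreover have "ln R \<le> y (Suc k)" unfolding y_def using Rle Rp by simp
    ultimately show ?thesis by simp
  qed
  have y0': "Bf l + M / (r - 1) \<le> (r - 1) * y 0"
  proof -
    have "(r - 1) * LB l \<le> (r - 1) * y 0"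
      using y0 r1 unfolding y_def x_def tk_def by simp
    then show ?thesis using \<Phi>pos unfolding \<Phi>_def E_def by simp
  qed
  define D where "D = (Bf l + M / (r - 1)) / (r - 1)"
  have yk: "D + E * real k \<le> y k" for k
    using disc[OF r1 less_imp_le[OF M0] rec y0'] unfolding D_def E_def by simp
  define k where "k = nat \<lceil>(ln (H (2 * T)) - D) / E\<rceil> + 1"
  have "(ln (H (2 * T)) - D) / E < real k" unfolding k_def by linarith
  then have "ln (H (2 * T)) - D < E * real k" using E0 by (simp add: divide_less_eq mult.commute)
  moreover have "y k \<le> ln (H (2 * T))" unfolding y_def using xle[of k] xpos[of k] by simp
  ultimately show False using yk[of k] by linarith
qed

end
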